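(* Let $D\subset\mathbb{C}$ be an open disk centered at $0$, $f_1,\dots,f_p:D\to\mathbb{C}$ analytic, $A_1,\dots,A_p\in\mathbb{C}^{n\times n}$ with $M(\lambda)=\sum_{m=1}^p f_m(\lambda)A_m$ satisfying $M(\lambda)^T=M(\lambda)$ on $D$, and $M_j:=M^{(j)}(0)$. Let $\mathbf{C}=[c_{i,j}]$ be the infinite matrix determined by $c_{i,1}=1/(i+1)$ ($i\ge1$) and $c_{i-1,j}=\frac{j}{i}c_{i,j-1}$ ($i,j>1$); let $\mathbf{S}$ be the infinite block matrix with $S_{1,1}=I$, $S_{1,j}=S_{j,1}=0$ ($j\ge2$), $S_{i,j}=c_{i-1,j-1}M_{i+j-2}$ ($i,j\ge2$); let $\mathbf{A}=\operatorname{diag}(-M_0,I,I,\dots)$; and let $\mathbf{B}$ have first block row $(M_1,\frac12M_2,\frac13M_3,\dots)$, blocks $\frac1jI$ in positions $(j+1,j)$, and zeros elsewhere. For a positive integer $N$, $[\mathbf{X}]_N$ denotes the leading $Nn\times Nn$ submatrix formed by the first $N\times N$ blocks. Let $k$ be a positive integer with $k+1\le N$, assume $[\mathbf{S}]_{2N}$ is invertible (and $[\mathbf{S}\mathbf{A}]_N$ is invertible, as implicit in the statement). Let $q_k\in\mathbb{C}^{Nn}$ be a vector, viewed as $N$ blocks in $\mathbb{C}^n$, such that only its first $k$ blocks are nonzero, these being the columns of $Q_k=[\tilde q_1,\dots,\tilde q_k]\in\mathbb{C}^{n\times k}$. Then only the first $k+1$ blocks of $w=[\mathbf{S}\mathbf{A}]_N^{-1}[\mathbf{S}\mathbf{B}]_Nq_k$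 are nonzero, and these are the columns of $W=[w_1,\dots,w_{k+1}]$ given by $$W=w_1e_1^T+Q_kD,\qquad w_1=-M_0^{-1}\sum_{j=1}^k\frac{M_j}{j}\tilde q_j,$$ where $D\in\mathbb{R}^{k\times(k+1)}$ has entries $d_{j,j+1}=1/j$ ($j=1,\dots,k$) and all other entries zero, and $e_1\in\mathbb{R}^{k+1}$ is the first unit vector.
   Context: Matrices and vectors are complex; transpose $^T$ is the plain (non-conjugate) transpose. *)

theory Defs
  imports "HOL-Analysis.Complex_Analysis_Basics" "HOL-Analysis.Infinite_Sum"
    "Jordan_Normal_Form.Gauss_Jordan_Elimination"
begin

definition Mfun :: "nat \<Rightarrow> nat \<Rightarrow> (nat \<Rightarrow> complex \<Rightarrow> complex) \<Rightarrow> (nat \<Rightarrow> complex mat)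
    \<Rightarrow> complex \<Rightarrow> complex mat" where
  "Mfun n p f A z = Matrix.mat n n (\<lambda>(a,b). \<Sum>m\<in>{1..p}. f m z * A m $$ (a,b))"

definition Mder :: "nat \<Rightarrow> nat \<Rightarrow> (nat \<Rightarrow> complex \<Rightarrow> complex) \<Rightarrow> (nat \<Rightarrow> complex mat)
    \<Rightarrow> nat \<Rightarrow> complex mat" where
  "Mder n p f A j = Matrix.mat n n (\<lambda>(a,b). (deriv ^^ j) (\<lambda>z. Mfun n p f A z $$ (a,b)) 0)"

text \<open>Coefficients c_{i,j} (1-based): c_{i,1} = 1/(i+1), c_{i,j+1} = (j+1)/(i+1) c_{i+1,j},
  which is the relation c_{i-1,j} = j/i c_{i,j-1}.  Index 0 values are never used.\<close>
fun cc :: "nat \<Rightarrow> nat \<Rightarrow> complex" where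
  "cc i 0 = 0"
| "cc i (Suc 0) = 1 / of_nat (i + 1)"
| "cc i (Suc (Suc j)) = of_nat (j + 2) / of_nat (i + 1) * cc (i + 1) (Suc j)"

text \<open>An infinite block matrix is given by its n x n blocks F i j (i, j \<ge> 1);
  it is represented as an infinite scalar matrix with 0-based scalar indices.\<close>
definition blockmat :: "nat \<Rightarrow> (nat \<Rightarrow> nat \<Rightarrow> complex mat) \<Rightarrow> nat \<Rightarrow> nat \<Rightarrow> complex" where
  "blockmat n F a b = F (a div n + 1) (b div n + 1) $$ (a mod n, b mod n)"

definition imat_mult :: "(nat \<Rightarrow> nat \<Rightarrow> complex) \<Rightarrow> (nat \<Rightarrow> nat \<Rightarrow> complex) \<Rightarrow> nat \<Rightarrow> nat \<Rightarrow> complex" where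
  "imat_mult X Y a b = infsum (\<lambda>c. X a c * Y c b) UNIV"

definition lead :: "nat \<Rightarrow> nat \<Rightarrow> (nat \<Rightarrow> nat \<Rightarrow> complex) \<Rightarrow> complex mat" where
  "lead n N X = Matrix.mat (N * n) (N * n) (\<lambda>(a,b). X a b)"

definition Sblk :: "nat \<Rightarrow> (nat \<Rightarrow> complex mat) \<Rightarrow> nat \<Rightarrow> nat \<Rightarrow> complex mat" where
  "Sblk n Md i j = (if i = 1 \<and> j = 1 then 1\<^sub>m n
      else if i = 1 \<or> j = 1 then 0\<^sub>m n n
      else cc (i - 1) (j - 1) \<cdot>\<^sub>m Md (i + j - 2))"

definition Ablk :: "nat \<Rightarrow> (nat \<Rightarrow> complex mat) \<Rightarrow> nat \<Rightarrow> nat \<Rightarrow> complex mat" where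
  "Ablk n Md i j = (if i \<noteq> j then 0\<^sub>m n n else if i = 1 then - Md 0 else 1\<^sub>m n)"

definition Bblk :: "nat \<Rightarrow> (nat \<Rightarrow> complex mat) \<Rightarrow> nat \<Rightarrow> nat \<Rightarrow> complex mat" where
  "Bblk n Md i j = (if i = 1 then (1 / of_nat j) \<cdot>\<^sub>m Md j
      else if i = j + 1 then (1 / of_nat j) \<cdot>\<^sub>m 1\<^sub>m n
      else 0\<^sub>m n n)"

definition minv :: "complex mat \<Rightarrow> complex mat" where
  "minv X = the (mat_inverse X)"

end

theory Submission imports Defs "Jordan_Normal_Form.Determinant" begin

lemma infsum_fin:
  fixes g :: "nat \<Rightarrow> complex"
  assumes "finite F" "\<And>c. c \<notin> F \<Longrightarrow> g c = 0"
  shows "infsum g UNIV = sum g F"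
proof -
  have "infsum g UNIV = infsum g F"
    by (rule infsum_cong_neutral) (use assms in auto)
  also have "\<dots> = sum g F" using assms(1) by simp
  finally show ?thesis .
qed

lemma minv_props:
  assumes X: "X \<in> carrier_mat m m" and Y: "Y \<in> carrier_mat m m" and XY: "X * Y = 1\<^sub>m m"
  shows "minv X * X = 1\<^sub>m m" "X * minv X = 1\<^sub>m m" "minv X \<in> carrier_mat m m"
proof -
  have YX: "Y * X = 1\<^sub>m m" using mat_mult_left_right_inverse[OF X Y XY] .
  have "X \<in> Units (ring_mat TYPE(complex) m (undefined::unit))"
    using X Y XY YX unfolding Units_def ring_mat_def by auto
  then have "mat_inverse X \<noteq> None" using mat_inverse(1)[OF X, where b="undefined::unit"] by blast
  then obtain Z where Z: "mat_inverse X = Some Z" by auto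
  have "minv X = Z" unfolding minv_def Z by simp
  then show "minv X * X = 1\<^sub>m m" "X * minv X = 1\<^sub>m m" "minv X \<in> carrier_mat m m"
    using mat_inverse(2)[OF X Z] by auto
qed

lemma invertible_obtain:
  assumes "invertible_mat X" "X \<in> carrier_mat m m"
  obtains Y where "Y \<in> carrier_mat m m" "X * Y = 1\<^sub>m m"
proof -
  from assms obtain Y where "inverts_mat X Y" "inverts_mat Y X"
    unfolding invertible_mat_def by auto
  then have "X * Y = 1\<^sub>m m" "Y * X = 1\<^sub>m (dim_row Y)" using assms(2) unfolding inverts_mat_def by auto
  moreover then have "Y \<in> carrier_mat m m"
    using assms(2) by (metis carrier_matD carrier_matI index_mult_mat(2,3) index_one_mat(2,3))
  ultimately show ?thesis using that by blast
qed

lemma sum_blocks: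
  fixes g :: "nat \<Rightarrow> complex"
  shows "sum g {..<k*n} = (\<Sum>j<k. \<Sum>t<n. g (j*n+t))"
proof (induction k)
  case 0 then show ?case by simp
next
  case (Suc k)
  have "sum g {..<Suc k*n} = sum g {..<k*n} + sum g {k*n..<k*n+n}"
    by (metis add.commute le_add2 lessThan_atLeast0 mult_Suc sum.atLeastLessThan_concat zero_le)
  also have "sum g {k*n..<k*n+n} = (\<Sum>t<n. g (k*n+t))"
    using sum.shift_bounds_nat_ivl[of g 0 "k*n" n] by (simp add: add.commute lessThan_atLeast0)
  finally show ?case using Suc by simp
qed


lemma sum_trunc:
  fixes g :: "nat \<Rightarrow> complex"
  assumes "n \<le> m" "\<And>c. n \<le> c \<Longrightarrow> c < m \<Longrightarrow> g c = 0"
  shows "sum g {..<m} = sum g {..<n}"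
proof (rule sum.mono_neutral_right)
  show "\<forall>i\<in>{..<m} - {..<n}. g i = 0" using assms(2) by auto
qed (use assms(1) in auto)

lemma div_mod_eqI: "(c::nat) div n = b div n \<Longrightarrow> c mod n = b mod n \<Longrightarrow> c = b"
  by (metis div_mult_mod_eq)

context
  fixes n :: nat and Md :: "nat \<Rightarrow> complex mat"
  assumes n: "n > 0" and Mc: "\<And>j. Md j \<in> carrier_mat n n"
begin

lemma S_top: "a < n \<Longrightarrow> blockmat n (Sblk n Md) a c = (if c = a then 1 else 0)"
  using n by (auto simp: blockmat_def Sblk_def div_eq_0_iff)

lemma S_left: "c < n \<Longrightarrow> blockmat n (Sblk n Md) a c = (if a = c then 1 else 0)"
  using n by (auto simp: blockmat_def Sblk_def div_eq_0_iff)

lemma A_low: "b < n \<Longrightarrow> blockmat n (Ablk n Md) c b = (if c < n then - (Md 0 $$ (c, b)) else 0)"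
  using n Mc[of 0] by (auto simp: blockmat_def Ablk_def div_eq_0_iff)

lemma A_high: "b \<ge> n \<Longrightarrow> blockmat n (Ablk n Md) c b = (if c = b then 1 else 0)"
  using n Mc[of 0] div_mod_eqI[of c n b] by (auto simp: blockmat_def Ablk_def div_eq_0_iff)

lemma B_ent: "blockmat n (Bblk n Md) c b =
   (if c < n then Md (b div n + 1) $$ (c, b mod n) / of_nat (b div n + 1)
    else if c = b + n then 1 / of_nat (b div n + 1) else 0)"
proof -
  have bm: "b mod n < n" "c mod n < n" using n by auto
  have Mj: "Md (b div n + 1) \<in> carrier_mat n n" by (rule Mc)
  show ?thesis
  proof (cases "c < n")
    case True
    then have "c div n = 0" "c mod n = c" by auto
    then show ?thesis using True bm Mj
      by (simp add: blockmat_def Bblk_def)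
  next
    case False
    then have c1: "c div n \<noteq> 0" using n by (simp add: div_eq_0_iff)
    show ?thesis
    proof (cases "c = b + n")
      case True
      then have "c div n = b div n + 1" "c mod n = b mod n" using n by auto
      then show ?thesis using True False bm by (simp add: blockmat_def Bblk_def)
    next
      case False2: False
      have "c div n = b div n + 1 \<Longrightarrow> c mod n \<noteq> b mod n"
        using div_mod_eqI[of c n "b+n"] n False2 by auto
      then show ?thesis using False False2 c1 bm
        by (auto simp: blockmat_def Bblk_def)
    qed
  qed
qed

lemma SA_ent: "imat_mult X (blockmat n (Ablk n Md)) a b =
   (if b < n then - (\<Sum>c<n. X a c * Md 0 $$ (c, b)) else X a b)"
proof (cases "b < n")
  case True
  have "imat_mult X (blockmat n (Ablk n Md)) a b = (\<Sum>c<n. X a c * blockmat n (Ablk n Md) c b)"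
    unfolding imat_mult_def by (rule infsum_fin) (auto simp: A_low[OF True])
  also have "\<dots> = - (\<Sum>c<n. X a c * Md 0 $$ (c, b))"
    by (simp add: A_low[OF True] sum_negf)
  finally show ?thesis using True by simp
next
  case False
  have "imat_mult X (blockmat n (Ablk n Md)) a b = (\<Sum>c\<in>{b}. X a c * blockmat n (Ablk n Md) c b)"
    unfolding imat_mult_def by (rule infsum_fin) (use False in \<open>auto simp: A_high\<close>)
  then show ?thesis using False by (simp add: A_high)
qed

lemma SB_ent: "imat_mult X (blockmat n (Bblk n Md)) a b =
   (\<Sum>c<n. X a c * Md (b div n + 1) $$ (c, b mod n) / of_nat (b div n + 1))
   + X a (b + n) / of_nat (b div n + 1)"
proof -
  have "imat_mult X (blockmat n (Bblk n Md)) a b = (\<Sum>c\<in>insert (b+n) {..<n}. X a c * blockmat n (Bblk n Md) c b)"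
    unfolding imat_mult_def by (rule infsum_fin) (auto simp: B_ent)
  also have "\<dots> = X a (b+n) * blockmat n (Bblk n Md) (b+n) b + (\<Sum>c<n. X a c * blockmat n (Bblk n Md) c b)"
    by (subst sum.insert) auto
  finally show ?thesis using n by (simp add: B_ent)
qed

end

theorem theorem3:
  fixes n p N k :: nat and r :: real
    and f :: "nat \<Rightarrow> complex \<Rightarrow> complex" and A :: "nat \<Rightarrow> complex mat"
    and Q :: "complex mat"
  defines "Md \<equiv> Mder n p f A"
  defines "S \<equiv> blockmat n (Sblk n Md)"
    and "AA \<equiv> blockmat n (Ablk n Md)"
    and "B \<equiv> blockmat n (Bblk n Md)"
  assumes r: "r > 0"
    and hol: "\<forall>m\<in>{1..p}. f m holomorphic_on ball 0 r"
    and Acar: "\<forall>m\<in>{1..p}. A m \<in> carrier_mat n n"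
    and sym: "\<forall>z\<in>ball 0 r. transpose_mat (Mfun n p f A z) = Mfun n p f A z"
    and k: "k \<ge> 1" "k + 1 \<le> N"
    and S2N: "invertible_mat (lead n (2 * N) S)"
    and SAN: "invertible_mat (lead n N (imat_mult S AA))"
    and Q: "Q \<in> carrier_mat n k"
  shows
    "let q = Matrix.vec (N * n) (\<lambda>a. if a div n < k then Q $$ (a mod n, a div n) else 0);
         w = minv (lead n N (imat_mult S AA)) *\<^sub>v (lead n N (imat_mult S B) *\<^sub>v q);
         w1 = - (minv (Md 0) *\<^sub>v
                  Matrix.vec n (\<lambda>a. \<Sum>j\<in>{1..k}. (Md j *\<^sub>v col Q (j - 1)) $ a / of_nat j));
         e1 = unit_vec (k + 1) 0;
         D = Matrix.mat k (k + 1) (\<lambda>(i, l). if l = i + 1 then 1 / of_nat (i + 1) else 0);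
         W = mat_of_cols n [w1] * mat_of_rows (k + 1) [e1] + Q * D
     in w = Matrix.vec (N * n) (\<lambda>a. if a div n < k + 1 then W $$ (a mod n, a div n) else 0)"
proof -
  have Mc: "\<And>j. Md j \<in> carrier_mat n n" by (simp add: Md_def Mder_def)
  have Mdim: "\<And>j. dim_row (Md j) = n" "\<And>j. dim_col (Md j) = n" using Mc by auto
  define q where "q = Matrix.vec (N * n) (\<lambda>a. if a div n < k then Q $$ (a mod n, a div n) else 0)"
  define v where "v = Matrix.vec n (\<lambda>a. \<Sum>j\<in>{1..k}. (Md j *\<^sub>v col Q (j - 1)) $ a / of_nat j)"
  define u where "u = minv (Md 0) *\<^sub>v v"
  define w1 where "w1 = - u"
  define e1 :: "complex vec" where "e1 = unit_vec (k + 1) 0"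
  define D where "D = Matrix.mat k (k + 1) (\<lambda>(i, l). if l = i + 1 then 1 / of_nat (i + 1) else (0::complex))"
  define W where "W = mat_of_cols n [w1] * mat_of_rows (k + 1) [e1] + Q * D"
  define wv where "wv = Matrix.vec (N * n) (\<lambda>a. if a div n < k + 1 then W $$ (a mod n, a div n) else 0)"
  define X where "X = lead n N (imat_mult S AA)"
  define Y where "Y = lead n N (imat_mult S B)"
  have Xc: "X \<in> carrier_mat (N*n) (N*n)" by (simp add: X_def lead_def)
  have Yc: "Y \<in> carrier_mat (N*n) (N*n)" by (simp add: Y_def lead_def)
  obtain Xi where Xi: "Xi \<in> carrier_mat (N*n) (N*n)" "X * Xi = 1\<^sub>m (N*n)"
    using invertible_obtain[OF SAN[folded X_def] Xc] by blast
  have minvX: "minv X * X = 1\<^sub>m (N*n)" "minv X \<in> carrier_mat (N*n) (N*n)"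
    using minv_props[OF Xc Xi(1) Xi(2)] by auto
  have main: "X *\<^sub>v wv = Y *\<^sub>v q"
  proof (cases "n = 0")
    case True
    then show ?thesis using Xc Yc by (intro eq_vecI) auto
  next
    case False
    then have n: "n > 0" by simp
    have N: "N \<ge> 1" using k by simp
    have nN: "n \<le> N * n" using N n by simp
    have ltN: "\<And>x. x < n \<Longrightarrow> x < N*n" using nN by linarith
    have kN: "k * n \<le> N * n" using k by simp
    have k1N: "(k+1) * n \<le> N * n" using k(2) mult_le_mono1 by blast
    have blk_div: "(j*n+t) div n = j \<and> (j*n+t) mod n = t" if "t < n" for j t
      using that by auto
    have blk_lt: "j*n+t < N*n" if "j < k+1" "t < n" for j t
    proof -
      have "j*n+t < (j+1)*n" using that by simp
      also have "\<dots> \<le> N*n" using that k(2) mult_le_mono1[of "j+1" N n] by linarith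
      finally show ?thesis .
    qed
    note SA = SA_ent[where Md=Md, OF n Mc, of S, folded AA_def]
    note SB = SB_ent[where Md=Md, OF n Mc, of S, folded B_def]
    note St = S_top[where Md=Md, OF n Mc, folded S_def]
    note Sl = S_left[where Md=Md, OF n Mc, folded S_def]
        have SA_top: "imat_mult S AA a b = (if b < n then - (Md 0 $$ (a, b)) else 0)" if "a < n" for a b
      using that by (simp add: SA St if_distrib[of "\<lambda>x. x * _"] cong: if_cong)
    have SA_low: "imat_mult S AA a b = (if b < n then 0 else S a b)" if "a \<ge> n" for a b
      using that by (simp add: SA Sl)
    define Z where "Z = Matrix.mat n n (\<lambda>(c, b). - Xi $$ (c, b))"
    have M0Z: "Md 0 * Z = 1\<^sub>m n"
    proof (rule eq_matI)
      fix i j assume ij: "i < dim_row (1\<^sub>m n :: complex mat)" "j < dim_col (1\<^sub>m n :: complex mat)"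
      then have ij': "i < n" "j < n" by auto
      have ijN: "i < N*n" "j < N*n" using ij' nN less_le_trans by blast+
      have "(X * Xi) $$ (i, j) = (\<Sum>c<N*n. X $$ (i, c) * Xi $$ (c, j))"
        using Xc Xi(1) ijN by (subst index_mult_mat) (auto simp: scalar_prod_def atLeast0LessThan intro!: sum.cong)
      also have "\<dots> = (\<Sum>c<n. X $$ (i, c) * Xi $$ (c, j))"
        by (rule sum_trunc[OF nN]) (use ij' in \<open>simp add: X_def lead_def SA_top\<close>)
      also have "\<dots> = (Md 0 * Z) $$ (i, j)"
        using ij' ltN Mc[of 0] by (auto simp: scalar_prod_def atLeast0LessThan X_def lead_def SA_top Z_def intro!: sum.cong)
      finally show "(Md 0 * Z) $$ (i, j) = 1\<^sub>m n $$ (i, j)"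
        using Xi(2) ij' nN by simp
    qed (use Mc[of 0] in \<open>auto simp: Z_def\<close>)
    have Zc: "Z \<in> carrier_mat n n" by (simp add: Z_def)
    have minvM: "Md 0 * minv (Md 0) = 1\<^sub>m n" "minv (Md 0) \<in> carrier_mat n n"
      using minv_props[OF Mc[of 0] Zc M0Z] by auto
    have vc: "v \<in> carrier_vec n" by (simp add: v_def)
    have uc: "u \<in> carrier_vec n" using minvM(2) vc by (simp add: u_def)
    have Mu: "Md 0 *\<^sub>v u = v"
      unfolding u_def using minvM vc Mc[of 0]
      by (metis assoc_mult_mat_vec one_mult_mat_vec)
    have Went: "W $$ (i, j) = (if j = 0 then w1 $ i else Q $$ (i, j - 1) / of_nat j)"
      if "i < n" "j < k + 1" for i j
    proof -
      have "(Q * D) $$ (i, j) = (\<Sum>t<k. Q $$ (i, t) * (if j = t + 1 then 1 / of_nat (t + 1) else 0))"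
        using that Q by (simp add: D_def scalar_prod_def atLeast0LessThan)
      also have "\<dots> = (if j = 0 then 0 else Q $$ (i, j - 1) / of_nat j)"
        using that by (cases j) (auto simp: if_distrib cong: if_cong)
      finally have QD: "(Q * D) $$ (i, j) = (if j = 0 then 0 else Q $$ (i, j - 1) / of_nat j)" .
      have Dc: "D \<in> carrier_mat k (k+1)" by (simp add: D_def)
      have "W $$ (i, j) = (mat_of_cols n [w1] * mat_of_rows (k + 1) [e1]) $$ (i, j) + (Q * D) $$ (i, j)"
        unfolding W_def using that Q Dc by (subst index_add_mat) auto
      also have "(mat_of_cols n [w1] * mat_of_rows (k + 1) [e1]) $$ (i, j) = w1 $ i * e1 $ j"
        using that by (subst index_mult_mat) (auto simp: scalar_prod_def mat_of_cols_def mat_of_rows_def)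
      finally show ?thesis
        using that QD by (simp add: e1_def)
    qed
    show ?thesis
    proof (rule eq_vecI)
      show "dim_vec (X *\<^sub>v wv) = dim_vec (Y *\<^sub>v q)" using Xc Yc by simp
      fix a assume "a < dim_vec (Y *\<^sub>v q)"
      then have a: "a < N * n" using Yc by simp
      have L: "(X *\<^sub>v wv) $ a = (\<Sum>b<N*n. imat_mult S AA a b * wv $ b)"
        using a by (simp add: X_def lead_def wv_def scalar_prod_def atLeast0LessThan)
      have R: "(Y *\<^sub>v q) $ a = (\<Sum>b<N*n. imat_mult S B a b * q $ b)"
        using a by (simp add: Y_def lead_def q_def scalar_prod_def atLeast0LessThan)
      show "(X *\<^sub>v wv) $ a = (Y *\<^sub>v q) $ a"
      proof (cases "a < n")
        case True
        have "(X *\<^sub>v wv) $ a = (\<Sum>b<n. imat_mult S AA a b * wv $ b)"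
          unfolding L by (rule sum_trunc[OF nN]) (use True in \<open>simp add: SA_top\<close>)
        also have "\<dots> = (\<Sum>b<n. Md 0 $$ (a, b) * u $ b)"
          using True ltN uc n k by (auto simp: SA_top wv_def Went w1_def intro!: sum.cong)
        also have "\<dots> = v $ a"
          using True Mc[of 0] uc by (simp add: Mu[symmetric] scalar_prod_def atLeast0LessThan)
        finally have Lv: "(X *\<^sub>v wv) $ a = v $ a" .
        have "(Y *\<^sub>v q) $ a = (\<Sum>b<k*n. imat_mult S B a b * q $ b)"
          unfolding R by (rule sum_trunc[OF kN]) (use n in \<open>auto simp: q_def div_less_iff_less_mult\<close>)
        also have "\<dots> = (\<Sum>j<k. \<Sum>t<n. imat_mult S B a (j*n+t) * q $ (j*n+t))"
          by (rule sum_blocks)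
        also have "\<dots> = (\<Sum>j<k. \<Sum>t<n. Md (j+1) $$ (a, t) / of_nat (j+1) * Q $$ (t, j))"
        proof (intro sum.cong refl)
          fix j t assume jt: "j \<in> {..<k}" "t \<in> {..<n}"
          have jn: "(j*n+t) div n = j" "(j*n+t) mod n = t" using jt n by auto
          have lt: "j*n+t < N*n" using blk_lt[of j t] jt by auto
          show "imat_mult S B a (j*n+t) * q $ (j*n+t) = Md (j+1) $$ (a, t) / of_nat (j+1) * Q $$ (t, j)"
            using True jt lt by (simp add: SB St jn q_def if_distrib[of "\<lambda>x. x * _"] sum_divide_distrib[symmetric] cong: if_cong)
        qed
        also have "\<dots> = v $ a"
        proof -
          have "v $ a = (\<Sum>j<k. (Md (Suc j) *\<^sub>v col Q j) $ a / of_nat (Suc j))"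
            using True by (simp add: v_def sum.atLeast1_atMost_eq )
          also have "\<dots> = (\<Sum>j<k. \<Sum>t<n. Md (j+1) $$ (a, t) / of_nat (j+1) * Q $$ (t, j))"
            using True Q Mc by (auto simp: Mdim scalar_prod_def atLeast0LessThan sum_divide_distrib intro!: sum.cong)
          finally show ?thesis by simp
        qed
        finally show ?thesis using Lv by simp
      next
        case False
        have "(X *\<^sub>v wv) $ a = (\<Sum>b<(k+1)*n. imat_mult S AA a b * wv $ b)"
          unfolding L by (rule sum_trunc[OF k1N]) (use n in \<open>auto simp: wv_def div_less_iff_less_mult\<close>)
        also have "\<dots> = (\<Sum>j<Suc k. \<Sum>t<n. imat_mult S AA a (j*n+t) * wv $ (j*n+t))"
          unfolding Suc_eq_plus1 by (rule sum_blocks)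
        also have "\<dots> = (\<Sum>j<k. \<Sum>t<n. imat_mult S AA a ((j+1)*n+t) * wv $ ((j+1)*n+t))"
          using False by (subst sum.lessThan_Suc_shift) (simp add: SA_low)
        also have "\<dots> = (\<Sum>j<k. \<Sum>t<n. S a (j*n+t+n) * Q $$ (t, j) / of_nat (j+1))"
        proof (intro sum.cong refl)
          fix j t assume jt: "j \<in> {..<k}" "t \<in> {..<n}"
          have e: "(j+1)*n+t = j*n+t+n" by simp
          have jn: "(j*n+t+n) div n = j+1" "(j*n+t+n) mod n = t" using blk_div[of t "j+1"] jt unfolding e by auto
          have lt: "j*n+t+n < N*n" using blk_lt[of "j+1" t] jt unfolding e by auto
          have s1: "imat_mult S AA a (j*n+t+n) = S a (j*n+t+n)" using False by (simp add: SA_low)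
          have s2: "wv $ (j*n+t+n) = W $$ (t, j+1)"
            unfolding wv_def index_vec[OF lt] jn using jt by simp
          have s3: "W $$ (t, j+1) = Q $$ (t, j) / of_nat (j+1)"
            using Went[of t "j+1"] jt by simp
          show "imat_mult S AA a ((j+1)*n+t) * wv $ ((j+1)*n+t) = S a (j*n+t+n) * Q $$ (t, j) / of_nat (j+1)"
            unfolding e s1 s2 s3 by simp
        qed
        also have "\<dots> = (\<Sum>j<k. \<Sum>t<n. imat_mult S B a (j*n+t) * q $ (j*n+t))"
        proof (intro sum.cong refl)
          fix j t assume jt: "j \<in> {..<k}" "t \<in> {..<n}"
          have jn: "(j*n+t) div n = j" "(j*n+t) mod n = t" using jt n by auto
          have lt: "j*n+t < N*n" using blk_lt[of j t] jt by auto
          show "S a (j*n+t+n) * Q $$ (t, j) / of_nat (j+1) = imat_mult S B a (j*n+t) * q $ (j*n+t)"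
            using False jt lt by (simp add: SB Sl jn q_def)
        qed
        also have "\<dots> = (\<Sum>b<k*n. imat_mult S B a b * q $ b)"
          by (rule sum_blocks[symmetric])
        also have "\<dots> = (Y *\<^sub>v q) $ a"
          unfolding R by (rule sum_trunc[OF kN, symmetric]) (use n in \<open>auto simp: q_def div_less_iff_less_mult\<close>)
        finally show ?thesis .
      qed
    qed
  qed
  have "minv X *\<^sub>v (Y *\<^sub>v q) = wv"
  proof -
    have wvc: "wv \<in> carrier_vec (N*n)" by (simp add: wv_def)
    have "minv X *\<^sub>v (Y *\<^sub>v q) = (minv X * X) *\<^sub>v wv"
      unfolding main[symmetric] by (rule assoc_mult_mat_vec[OF minvX(2) Xc wvc, symmetric])
    also have "\<dots> = wv" by (simp only: minvX(1) one_mult_mat_vec[OF wvc])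
    finally show ?thesis .
  qed
  then show ?thesis
    unfolding Let_def q_def v_def u_def w1_def e1_def D_def W_def wv_def X_def Y_def .
qed

end
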